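(* Let $G=(V,E)$ be a finite connected graph, $G'=(V',E')$ a connected subgraph, $F\subset E$, $q\ge1$, $\kappa\in\{1,q\}^E$ and $f\in E'\setminus F$. Then $$\frac{\det\Delta^{G'}_{\kappa_f^+}}{\det\Delta^{G'}_{\kappa_f^-}}\ \ge\ \frac{\det\Delta^{G}_{\kappa_f^+}}{\det\Delta^{G}_{\kappa_f^-}}\ \ge\ \frac{\det\Delta^{G/F}_{\kappa_f^+}}{\det\Delta^{G/F}_{\kappa_f^-}}.$$
   Context: For a finite connected (multi)graph $H$ with conductances $c$ on its edges, $\Delta^H_cf(x)=\sum_{e=\{x,y\}}c_e(f(x)-f(y))$ (sum over edges incident to $x$; loops contribute nothing) acting on $\{f:\mathbf V(H)\to\mathbb R:\sum_xf(x)=0\}$, and $\det\Delta^H_c$ is its determinant. $\Delta^{G'}_\kappa$ uses the restriction of $\kappa$ to $E'$. $G/F$ is the multigraph obtained by identifying the two endpoints of every $f'\in F$ (its edges are identified with $E\setminus F$, possibly including loops), with conductances $\kappa$ restricted to $E\setminus F$. $\kappa^+_f$ ($\kappa^-_f$) is the configuration equal to $\kappa$ except that its value at $f$ is $q$ (resp. $1$). *)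

theory Defs
  imports Complex_Main "HOL-Combinatorics.Permutations"
begin

text \<open>Finite multigraphs: vertex set V, edge set E, endpoint map ends
  (an edge e joins fst (ends e) and snd (ends e); loops allowed).\<close>

definition edge_rel :: "'e set \<Rightarrow> ('e \<Rightarrow> 'v \<times> 'v) \<Rightarrow> ('v \<times> 'v) set" where
  "edge_rel E ends = {ends e | e. e \<in> E} \<union> {prod.swap (ends e) | e. e \<in> E}"

definition finite_mgraph :: "'v set \<Rightarrow> 'e set \<Rightarrow> ('e \<Rightarrow> 'v \<times> 'v) \<Rightarrow> bool" where
  "finite_mgraph V E ends \<longleftrightarrow> finite V \<and> finite E \<and>
     (\<forall>e\<in>E. fst (ends e) \<in> V \<and> snd (ends e) \<in> V)"

definition connected_mgraph :: "'v set \<Rightarrow> 'e set \<Rightarrow> ('e \<Rightarrow> 'v \<times> 'v) \<Rightarrow> bool" where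
  "connected_mgraph V E ends \<longleftrightarrow> finite_mgraph V E ends \<and> V \<noteq> {} \<and>
     (\<forall>x\<in>V. \<forall>y\<in>V. (x, y) \<in> (edge_rel E ends)\<^sup>*)"

definition lap :: "'e set \<Rightarrow> ('e \<Rightarrow> 'v \<times> 'v) \<Rightarrow> ('e \<Rightarrow> real) \<Rightarrow> ('v \<Rightarrow> real) \<Rightarrow> 'v \<Rightarrow> real" where
  "lap E ends c h x = (\<Sum>e\<in>E.
      (if fst (ends e) = x then c e * (h x - h (snd (ends e))) else 0)
    + (if snd (ends e) = x then c e * (h x - h (fst (ends e))) else 0))"

definition det_on :: "'i set \<Rightarrow> ('i \<Rightarrow> 'i \<Rightarrow> real) \<Rightarrow> real" where
  "det_on I M = (\<Sum>p\<in>{p. p permutes I}. of_int (sign p) * (\<Prod>i\<in>I. M i (p i)))"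

text \<open>Determinant of the Laplacian acting on {h : V \<rightarrow> R. sum h = 0}, computed as the
  determinant of its matrix in the basis (delta_x - delta_x0), x \<in> V - {x0}:
  a zero-sum h has coordinates h(y), y \<noteq> x0, so the matrix entry (y,x) is
  (Delta (delta_x - delta_x0))(y).\<close>
definition det_lap :: "'v set \<Rightarrow> 'e set \<Rightarrow> ('e \<Rightarrow> 'v \<times> 'v) \<Rightarrow> ('e \<Rightarrow> real) \<Rightarrow> real" where
  "det_lap V E ends c =
    (let x0 = (SOME x. x \<in> V)
     in det_on (V - {x0})
          (\<lambda>y x. lap E ends c (\<lambda>z. (if z = x then 1 else 0) - (if z = x0 then 1 else 0)) y))"

text \<open>Contraction G/F: vertices are the classes of V under the equivalence generated
  by the edges of F; edges are E - F with endpoints mapped to their classes.\<close>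
definition cls :: "'v set \<Rightarrow> 'e set \<Rightarrow> ('e \<Rightarrow> 'v \<times> 'v) \<Rightarrow> 'v \<Rightarrow> 'v set" where
  "cls V F ends x = {y \<in> V. (x, y) \<in> (edge_rel F ends)\<^sup>*}"

definition contr_ends :: "'v set \<Rightarrow> 'e set \<Rightarrow> ('e \<Rightarrow> 'v \<times> 'v) \<Rightarrow> 'e \<Rightarrow> 'v set \<times> 'v set" where
  "contr_ends V F ends e = (cls V F ends (fst (ends e)), cls V F ends (snd (ends e)))"

end

theory Submission
  imports Defs
begin



lemma det_on_cong:
  assumes "\<And>i j. i \<in> I \<Longrightarrow> j \<in> I \<Longrightarrow> M i j = N i j"
  shows "det_on I M = det_on I N"
  unfolding det_on_def
proof (rule sum.cong[OF refl])
  fix p assume "p \<in> {p. p permutes I}"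
  hence p: "p permutes I" by simp
  show "of_int (sign p) * (\<Prod>i\<in>I. M i (p i)) = of_int (sign p) * (\<Prod>i\<in>I. N i (p i))"
    using assms permutes_in_image[OF p] by (auto intro!: prod.cong)
qed

lemma det_on_transpose:
  assumes fin: "finite I"
  shows "det_on I (\<lambda>i j. M j i) = det_on I M"
proof -
  have "det_on I (\<lambda>i j. M j i) = (\<Sum>p\<in>{p. p permutes I}. of_int (sign (inv p)) * (\<Prod>i\<in>I. M (inv p i) i))"
    unfolding det_on_def by (subst sum_permutations_inverse) simp
  also have "\<dots> = det_on I M"
    unfolding det_on_def
  proof (rule sum.cong[OF refl])
    fix p assume "p \<in> {p. p permutes I}"
    hence p: "p permutes I" by simp
    have s: "sign (inv p) = sign p"
      by (metis sign_inverse fin p permutation_permutes)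
    have "(\<Prod>i\<in>I. M (inv p i) i) = (\<Prod>i\<in>p ` I. M (inv p i) i)"
      using permutes_image[OF p] by simp
    also have "\<dots> = (\<Prod>i\<in>I. M (inv p (p i)) (p i))"
      by (subst prod.reindex) (auto intro: inj_on_subset[OF permutes_inj[OF p]])
    also have "\<dots> = (\<Prod>i\<in>I. M i (p i))"
      using permutes_inverses[OF p] by simp
    finally show "of_int (sign (inv p)) * (\<Prod>i\<in>I. M (inv p i) i) = of_int (sign p) * (\<Prod>i\<in>I. M i (p i))"
      using s by simp
  qed
  finally show ?thesis .
qed

lemma det_on_col_linear:
  assumes fin: "finite I" and u: "u \<in> I"
  shows "det_on I (\<lambda>i j. if j = u then (\<Sum>x\<in>X. a x * C x i) else M i j)
       = (\<Sum>x\<in>X. a x * det_on I (\<lambda>i j. if j = u then C x i else M i j))"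
proof -
  have key: "(\<Prod>i\<in>I. (\<lambda>i j. if j = u then c i else M i j) i (p i))
      = c (inv p u) * (\<Prod>i\<in>I - {inv p u}. M i (p i))" if p: "p permutes I" for p c
  proof -
    have i0: "inv p u \<in> I" using permutes_in_image[OF permutes_inv[OF p]] u by simp
    have pi0: "p (inv p u) = u" using permutes_inverses[OF p] by simp
    have "(\<Prod>i\<in>I. (\<lambda>i j. if j = u then c i else M i j) i (p i))
        = (\<lambda>i j. if j = u then c i else M i j) (inv p u) (p (inv p u)) *
          (\<Prod>i\<in>I - {inv p u}. (\<lambda>i j. if j = u then c i else M i j) i (p i))"
      using prod.remove[OF fin i0] by blast
    also have "(\<Prod>i\<in>I - {inv p u}. (\<lambda>i j. if j = u then c i else M i j) i (p i))
        = (\<Prod>i\<in>I - {inv p u}. M i (p i))"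
    proof (rule prod.cong[OF refl])
      fix i assume "i \<in> I - {inv p u}"
      hence "p i \<noteq> u" using permutes_inverses[OF p] by (metis DiffD2 singletonI)
      thus "(\<lambda>i j. if j = u then c i else M i j) i (p i) = M i (p i)" by simp
    qed
    finally show ?thesis using pi0 by simp
  qed
  have "det_on I (\<lambda>i j. if j = u then (\<Sum>x\<in>X. a x * C x i) else M i j)
      = (\<Sum>p\<in>{p. p permutes I}. (\<Sum>x\<in>X. a x * (of_int (sign p) * (C x (inv p u) * (\<Prod>i\<in>I - {inv p u}. M i (p i))))))"
    unfolding det_on_def
  proof (rule sum.cong[OF refl])
    fix p assume "p \<in> {p. p permutes I}"
    hence p: "p permutes I" by simp
    show "of_int (sign p) * (\<Prod>i\<in>I. (\<lambda>i j. if j = u then (\<Sum>x\<in>X. a x * C x i) else M i j) i (p i))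
      = (\<Sum>x\<in>X. a x * (of_int (sign p) * (C x (inv p u) * (\<Prod>i\<in>I - {inv p u}. M i (p i)))))"
      unfolding key[OF p] by (simp add: sum_distrib_left sum_distrib_right algebra_simps)
  qed
  also have "\<dots> = (\<Sum>x\<in>X. a x * (\<Sum>p\<in>{p. p permutes I}. of_int (sign p) * (C x (inv p u) * (\<Prod>i\<in>I - {inv p u}. M i (p i)))))"
    by (subst sum.swap) (simp add: sum_distrib_left)
  also have "\<dots> = (\<Sum>x\<in>X. a x * det_on I (\<lambda>i j. if j = u then C x i else M i j))"
  proof (rule sum.cong[OF refl])
    fix x assume "x \<in> X"
    have "(\<Sum>p\<in>{p. p permutes I}. of_int (sign p) * (C x (inv p u) * (\<Prod>i\<in>I - {inv p u}. M i (p i))))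
       = det_on I (\<lambda>i j. if j = u then C x i else M i j)"
      unfolding det_on_def
    proof (rule sum.cong[OF refl])
      fix p assume "p \<in> {p. p permutes I}"
      hence p: "p permutes I" by simp
      show "of_int (sign p) * (C x (inv p u) * (\<Prod>i\<in>I - {inv p u}. M i (p i)))
         = of_int (sign p) * (\<Prod>i\<in>I. (\<lambda>i j. if j = u then C x i else M i j) i (p i))"
        by (simp only: key[OF p])
    qed
    thus "a x * (\<Sum>p\<in>{p. p permutes I}. of_int (sign p) * (C x (inv p u) * (\<Prod>i\<in>I - {inv p u}. M i (p i))))
       = a x * det_on I (\<lambda>i j. if j = u then C x i else M i j)" by simp
  qed
  finally show ?thesis .
qed

lemma det_on_col_scale:
  assumes fin: "finite I" and u: "u \<in> I"
  shows "det_on I (\<lambda>i j. if j = u then a * C i else M i j)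
       = a * det_on I (\<lambda>i j. if j = u then C i else M i j)"
proof -
  have e: "\<And>i. (\<Sum>x\<in>{()}. a * C i) = a * C i" by simp
  show ?thesis
    using det_on_col_linear[OF fin u, where X="{()}" and a="\<lambda>_. a" and C="\<lambda>_. C" and M=M]
    unfolding e by simp
qed

lemma det_on_identical_cols:
  assumes fin: "finite I" and jk: "j \<in> I" "k \<in> I" "j \<noteq> k"
    and eq: "\<And>i. i \<in> I \<Longrightarrow> M i j = M i k"
  shows "det_on I M = 0"
proof -
  let ?t = "Transposition.transpose j k"
  let ?f = "\<lambda>p. of_int (sign p) * (\<Prod>i\<in>I. M i (p i))"
  have tp: "?t permutes I" using jk by (simp add: permutes_swap_id)
  have tt: "\<And>a. ?t \<circ> (?t \<circ> a) = a" by (simp add: fun_eq_iff)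
  have "det_on I M = sum ?f {p. p permutes I}" unfolding det_on_def ..
  also have "\<dots> = sum (\<lambda>p. ?f (?t \<circ> p)) {p. p permutes I}"
  proof (rule sum.reindex_bij_witness[where i="\<lambda>p. ?t \<circ> p" and j="\<lambda>p. ?t \<circ> p"])
    fix a assume "a \<in> {p. p permutes I}"
    hence a: "a permutes I" by simp
    show "?t \<circ> (?t \<circ> a) = a" by (rule tt)
    show "?t \<circ> a \<in> {p. p permutes I}" using permutes_compose[OF a tp] by simp
    show "?f (?t \<circ> (?t \<circ> a)) = ?f a" by (simp only: tt)
  next
    fix b assume "b \<in> {p. p permutes I}"
    hence b: "b permutes I" by simp
    show "?t \<circ> (?t \<circ> b) = b" by (rule tt)
    show "?t \<circ> b \<in> {p. p permutes I}" using permutes_compose[OF b tp] by simp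
  qed
  also have "\<dots> = sum (\<lambda>p. - ?f p) {p. p permutes I}"
  proof (rule sum.cong[OF refl])
    fix p assume "p \<in> {p. p permutes I}"
    hence p: "p permutes I" by simp
    have "sign (?t \<circ> p) = - sign p"
      using sign_compose[of ?t p] sign_swap_id[of j k] jk fin p tp
      by (simp add: permutation_permutes) (metis permutation_permutes)
    moreover have "(\<Prod>i\<in>I. M i ((?t \<circ> p) i)) = (\<Prod>i\<in>I. M i (p i))"
    proof (rule prod.cong[OF refl])
      fix i assume i: "i \<in> I"
      show "M i ((?t \<circ> p) i) = M i (p i)"
        using eq[OF i] by (auto simp: Transposition.transpose_def)
    qed
    ultimately show "?f (?t \<circ> p) = - ?f p" by simp
  qed
  also have "\<dots> = - det_on I M" unfolding det_on_def by (simp add: sum_negf)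
  finally show ?thesis by simp
qed

lemma det_on_colop:
  assumes fin: "finite I" and u: "u \<in> I"
  shows "det_on I (\<lambda>i j. if j = u then (\<Sum>x\<in>I. h x * M i x) else M i j) = h u * det_on I M"
proof -
  have "det_on I (\<lambda>i j. if j = u then (\<Sum>x\<in>I. h x * M i x) else M i j)
      = (\<Sum>x\<in>I. h x * det_on I (\<lambda>i j. if j = u then M i x else M i j))"
    by (rule det_on_col_linear[OF fin u])
  also have "\<dots> = h u * det_on I (\<lambda>i j. if j = u then M i u else M i j)
      + (\<Sum>x\<in>I - {u}. h x * det_on I (\<lambda>i j. if j = u then M i x else M i j))"
    using sum.remove[OF fin u] by blast
  also have "(\<Sum>x\<in>I - {u}. h x * det_on I (\<lambda>i j. if j = u then M i x else M i j)) = 0"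
  proof (rule sum.neutral, rule ballI)
    fix x assume x: "x \<in> I - {u}"
    have "det_on I (\<lambda>i j. if j = u then M i x else M i j) = 0"
      by (rule det_on_identical_cols[OF fin u, of x]) (use x in auto)
    thus "h x * det_on I (\<lambda>i j. if j = u then M i x else M i j) = 0" by simp
  qed
  also have "(\<lambda>i j. if j = u then M i u else M i j) = M" by (auto simp: fun_eq_iff)
  finally show ?thesis by simp
qed

lemma det_on_expand_col:
  assumes fin: "finite I" and u: "u \<in> I"
    and z: "\<And>i. i \<in> I \<Longrightarrow> i \<noteq> u \<Longrightarrow> M i u = 0"
  shows "det_on I M = M u u * det_on (I - {u}) M"
proof -
  let ?f = "\<lambda>p. of_int (sign p) * (\<Prod>i\<in>I. M i (p i))"
  have "det_on I M = sum ?f {p. p permutes I}" unfolding det_on_def ..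
  also have "\<dots> = sum ?f {p. p permutes (I - {u})}"
  proof (rule sum.mono_neutral_right)
    show "finite {p. p permutes I}" using fin by (rule finite_permutations)
    show "{p. p permutes (I - {u})} \<subseteq> {p. p permutes I}"
      by (auto intro: permutes_subset)
    show "\<forall>p\<in>{p. p permutes I} - {p. p permutes (I - {u})}. ?f p = 0"
    proof
      fix p assume "p \<in> {p. p permutes I} - {p. p permutes (I - {u})}"
      hence p: "p permutes I" and np: "\<not> p permutes (I - {u})" by auto
      have "p u \<noteq> u"
      proof
        assume pu: "p u = u"
        have "p permutes (I - {u})"
          unfolding permutes_def
        proof (intro conjI allI impI)
          fix x assume "x \<notin> I - {u}" thus "p x = x"
            using pu permutes_not_in[OF p] by auto
        next
          fix y show "\<exists>!x. p x = y" using p unfolding permutes_def by blast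
        qed
        with np show False by simp
      qed
      hence i0: "inv p u \<noteq> u" using permutes_inverses[OF p] by metis
      have i0I: "inv p u \<in> I" using permutes_in_image[OF permutes_inv[OF p]] u by simp
      have "M (inv p u) (p (inv p u)) = 0" using z[OF i0I i0] permutes_inverses[OF p] by simp
      hence "(\<Prod>i\<in>I. M i (p i)) = 0" using i0I fin by (metis prod_zero_iff)
      thus "?f p = 0" by simp
    qed
  qed
  also have "\<dots> = M u u * det_on (I - {u}) M"
    unfolding det_on_def sum_distrib_left
  proof (rule sum.cong[OF refl])
    fix p assume "p \<in> {p. p permutes (I - {u})}"
    hence p: "p permutes (I - {u})" by simp
    have pu: "p u = u" using permutes_not_in[OF p] by simp
    have "(\<Prod>i\<in>I. M i (p i)) = M u (p u) * (\<Prod>i\<in>I - {u}. M i (p i))"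
      using prod.remove[OF fin u] by blast
    thus "?f p = M u u * (of_int (sign p) * (\<Prod>i\<in>I - {u}. M i (p i)))"
      using pu by simp
  qed
  finally show ?thesis .
qed

lemma det_on_rowop:
  assumes fin: "finite I" and u: "u \<in> I"
  shows "det_on I (\<lambda>i j. if i = u then (\<Sum>x\<in>I. h x * M x j) else M i j) = h u * det_on I M"
proof -
  have "det_on I (\<lambda>i j. if i = u then (\<Sum>x\<in>I. h x * M x j) else M i j)
     = det_on I (\<lambda>i j. if j = u then (\<Sum>x\<in>I. h x * M x i) else M j i)"
    by (subst det_on_transpose[OF fin, symmetric]) simp
  also have "\<dots> = h u * det_on I (\<lambda>i j. M j i)"
    by (rule det_on_colop[OF fin u])
  finally show ?thesis using det_on_transpose[OF fin] by simp
qed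




definition qf :: "'i set \<Rightarrow> ('i \<Rightarrow> 'i \<Rightarrow> real) \<Rightarrow> ('i \<Rightarrow> real) \<Rightarrow> real" where
  "qf R M h = (\<Sum>y\<in>R. \<Sum>x\<in>R. h y * M y x * h x)"

definition mv :: "'i set \<Rightarrow> ('i \<Rightarrow> 'i \<Rightarrow> real) \<Rightarrow> ('i \<Rightarrow> real) \<Rightarrow> 'i \<Rightarrow> real" where
  "mv R M h y = (\<Sum>x\<in>R. M y x * h x)"

definition pd :: "'i set \<Rightarrow> ('i \<Rightarrow> 'i \<Rightarrow> real) \<Rightarrow> bool" where
  "pd R M \<longleftrightarrow> (\<forall>h. (\<exists>x\<in>R. h x \<noteq> 0) \<longrightarrow> qf R M h > 0)"

definition symm :: "'i set \<Rightarrow> ('i \<Rightarrow> 'i \<Rightarrow> real) \<Rightarrow> bool" where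
  "symm R M \<longleftrightarrow> (\<forall>i\<in>R. \<forall>j\<in>R. M i j = M j i)"

lemma qf_mv: "qf R M h = (\<Sum>y\<in>R. h y * mv R M h y)"
  unfolding qf_def mv_def by (simp add: sum_distrib_left mult.assoc)

lemma qf_restrict:
  assumes "finite R" "S \<subseteq> R" "\<And>x. x \<in> R - S \<Longrightarrow> h x = 0"
  shows "qf R M h = qf S M h"
proof -
  have "qf R M h = (\<Sum>y\<in>R. \<Sum>x\<in>S. h y * M y x * h x)"
    unfolding qf_def
    by (rule sum.cong[OF refl], rule sum.mono_neutral_right) (use assms in \<open>auto intro: finite_subset\<close>)
  also have "\<dots> = qf S M h"
    unfolding qf_def
    by (rule sum.mono_neutral_right) (use assms in \<open>auto intro: finite_subset\<close>)
  finally show ?thesis .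
qed

lemma qf_cong:
  assumes "\<And>x. x \<in> R \<Longrightarrow> h x = g x"
  shows "qf R M h = qf R M g"
  unfolding qf_def using assms by simp

lemma mv_cong:
  assumes "\<And>x. x \<in> R \<Longrightarrow> h x = g x"
  shows "mv R M h y = mv R M g y"
  unfolding mv_def using assms by simp

lemma pd_subset:
  assumes fin: "finite R" and S: "S \<subseteq> R" and pd: "pd R M"
  shows "pd S M"
  unfolding pd_def
proof (intro allI impI)
  fix h :: "_ \<Rightarrow> real" assume "\<exists>x\<in>S. h x \<noteq> 0"
  then obtain x where x: "x \<in> S" "h x \<noteq> 0" by blast
  let ?h = "\<lambda>x. if x \<in> S then h x else (0::real)"
  have ex: "\<exists>x\<in>R. ?h x \<noteq> 0" using x S by auto
  have "qf R M ?h > 0" using pd[unfolded pd_def, rule_format, OF ex] .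
  also have "qf R M ?h = qf S M ?h" by (rule qf_restrict[OF fin S]) simp
  also have "\<dots> = qf S M h" by (rule qf_cong) simp
  finally show "qf S M h > 0" .
qed

lemma symm_subset: "symm R M \<Longrightarrow> S \<subseteq> R \<Longrightarrow> symm S M"
  unfolding symm_def by blast

lemma pd_nonneg:
  assumes "pd R M" shows "qf R M h \<ge> 0"
proof (cases "\<exists>x\<in>R. h x \<noteq> 0")
  case True thus ?thesis using assms unfolding pd_def by (simp add: less_imp_le)
next
  case False thus ?thesis unfolding qf_def by simp
qed

lemma qf_add:
  assumes sym: "symm R M"
  shows "qf R M (\<lambda>x. h x + d x) = qf R M h + 2 * (\<Sum>y\<in>R. d y * mv R M h y) + qf R M d"
proof -
  have c: "(\<Sum>y\<in>R. \<Sum>x\<in>R. h y * M y x * d x) = (\<Sum>y\<in>R. d y * mv R M h y)"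
  proof -
    have "(\<Sum>y\<in>R. \<Sum>x\<in>R. h y * M y x * d x) = (\<Sum>x\<in>R. \<Sum>y\<in>R. h y * M y x * d x)"
      by (rule sum.swap)
    also have "\<dots> = (\<Sum>x\<in>R. d x * mv R M h x)"
      unfolding mv_def sum_distrib_left
      by (rule sum.cong[OF refl], rule sum.cong[OF refl]) (use sym in \<open>auto simp: symm_def\<close>)
    finally show ?thesis .
  qed
  have c2: "(\<Sum>y\<in>R. \<Sum>x\<in>R. d y * M y x * h x) = (\<Sum>y\<in>R. d y * mv R M h y)"
    unfolding mv_def sum_distrib_left by (simp add: mult.assoc)
  have "qf R M (\<lambda>x. h x + d x) = (\<Sum>y\<in>R. \<Sum>x\<in>R. h y * M y x * h x + h y * M y x * d x + d y * M y x * h x + d y * M y x * d x)"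
    unfolding qf_def by (simp add: algebra_simps)
  also have "\<dots> = qf R M h + (\<Sum>y\<in>R. \<Sum>x\<in>R. h y * M y x * d x) + (\<Sum>y\<in>R. \<Sum>x\<in>R. d y * M y x * h x) + qf R M d"
    unfolding qf_def by (simp add: sum.distrib)
  finally show ?thesis using c c2 by simp
qed

lemma mv_lin: "mv R M (\<lambda>x. g x + a * h x) y = mv R M g y + a * mv R M h y"
  unfolding mv_def by (simp add: sum.distrib sum_distrib_left algebra_simps)

lemma solve_pd:
  assumes "finite R" "pd R M" "symm R M"
  shows "\<exists>h. \<forall>y\<in>R. mv R M h y = b y"
  using assms
proof (induction R arbitrary: b rule: finite_induct)
  case empty thus ?case by simp
next
  case (insert u S)
  let ?R = "insert u S"
  have pdS: "pd S M" by (rule pd_subset[OF _ _ insert.prems(1)]) (use insert in auto)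
  have symS: "symm S M" by (rule symm_subset[OF insert.prems(2)]) auto
  obtain z where z: "\<forall>y\<in>S. mv S M z y = - M y u" using insert.IH[OF pdS symS, of "\<lambda>y. - M y u"] by blast
  define hs where "hs = z(u := 1)"
  have mvR: "mv ?R M g y = M y u * g u + mv S M g y" for g y
    unfolding mv_def using insert by simp
  have hsz: "mv S M hs y = mv S M z y" for y
    by (rule mv_cong) (use insert in \<open>auto simp: hs_def\<close>)
  have hs0: "\<forall>y\<in>S. mv ?R M hs y = 0"
    using z by (simp add: mvR hsz) (simp add: hs_def)
  have qfhs: "qf ?R M hs = mv ?R M hs u"
    unfolding qf_mv using insert hs0 by (simp add: hs_def)
  have spos: "qf ?R M hs > 0" using insert.prems(1) unfolding pd_def by (force simp: hs_def)
  obtain y0 where y0: "\<forall>y\<in>S. mv S M y0 y = b y" using insert.IH[OF pdS symS, of b] by blast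
  define g where "g = y0(u := 0)"
  have gS: "mv S M g y = mv S M y0 y" for y
    by (rule mv_cong) (use insert in \<open>auto simp: g_def\<close>)
  define \<alpha> where "\<alpha> = (b u - mv ?R M g u) / qf ?R M hs"
  show ?case
  proof (intro exI ballI)
    fix y assume y: "y \<in> ?R"
    show "mv ?R M (\<lambda>x. g x + \<alpha> * hs x) y = b y"
    proof (cases "y = u")
      case True
      have "mv ?R M (\<lambda>x. g x + \<alpha> * hs x) u = mv ?R M g u + \<alpha> * mv ?R M hs u" by (rule mv_lin)
      thus ?thesis using True spos qfhs by (simp add: \<alpha>_def)
    next
      case False hence yS: "y \<in> S" using y by simp
      thus ?thesis using hs0 y0 by (simp add: mv_lin mvR gS) (simp add: g_def)
    qed
  qed
qed

lemma schur_min: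
  assumes fin: "finite R" and pd: "pd R M" and sym: "symm R M" and u: "u \<in> R"
  shows "\<exists>h. h u = 1 \<and> det_on R M = qf R M h * det_on (R - {u}) M
           \<and> (\<forall>g. g u = 1 \<longrightarrow> qf R M h \<le> qf R M g)"
proof -
  let ?S = "R - {u}"
  have finS: "finite ?S" using fin by simp
  have pdS: "pd ?S M" by (rule pd_subset[OF fin _ pd]) auto
  have symS: "symm ?S M" by (rule symm_subset[OF sym]) auto
  obtain z where z: "\<forall>y\<in>?S. mv ?S M z y = - M y u" using solve_pd[OF finS pdS symS, of "\<lambda>y. - M y u"] by blast
  define h where "h = z(u := 1)"
  have mvR: "mv R M g y = M y u * g u + mv ?S M g y" for g y
    unfolding mv_def using sum.remove[OF fin u] by simp
  have hz: "mv ?S M h y = mv ?S M z y" for y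
    by (rule mv_cong) (auto simp: h_def)
  have h0: "\<forall>y\<in>?S. mv R M h y = 0"
    using z by (simp add: mvR hz) (simp add: h_def)
  have qfh: "qf R M h = mv R M h u"
  proof -
    have "qf R M h = h u * mv R M h u + (\<Sum>y\<in>?S. h y * mv R M h y)"
      unfolding qf_mv using sum.remove[OF fin u] by simp
    also have "(\<Sum>y\<in>?S. h y * mv R M h y) = 0" using h0 by simp
    moreover have "h u = 1" by (simp add: h_def)
    ultimately show ?thesis by simp
  qed
  let ?M' = "\<lambda>i j. if j = u then (\<Sum>x\<in>R. h x * M i x) else M i j"
  have "det_on R ?M' = h u * det_on R M" by (rule det_on_colop[OF fin u])
  hence d1: "det_on R M = det_on R ?M'" by (simp add: h_def)
  have colu: "(\<Sum>x\<in>R. h x * M i x) = mv R M h i" for i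
    unfolding mv_def by (simp add: mult.commute)
  have "det_on R ?M' = ?M' u u * det_on ?S ?M'"
    by (rule det_on_expand_col[OF fin u]) (use h0 colu in auto)
  also have "det_on ?S ?M' = det_on ?S M" by (rule det_on_cong) auto
  finally have det: "det_on R M = qf R M h * det_on ?S M" using d1 colu qfh by simp
  have min: "qf R M h \<le> qf R M g" if g: "g u = 1" for g
  proof -
    define d where "d x = g x - h x" for x
    have "qf R M g = qf R M (\<lambda>x. h x + d x)" by (rule qf_cong) (simp add: d_def)
    also have "\<dots> = qf R M h + 2 * (\<Sum>y\<in>R. d y * mv R M h y) + qf R M d"
      by (rule qf_add[OF sym])
    also have "(\<Sum>y\<in>R. d y * mv R M h y) = d u * mv R M h u + (\<Sum>y\<in>?S. d y * mv R M h y)"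
      using sum.remove[OF fin u] by simp
    also have "\<dots> = 0" using h0 g by (simp add: d_def h_def)
    finally show ?thesis using pd_nonneg[OF pd, of d] by simp
  qed
  show ?thesis using det min by (intro exI[of _ h]) (simp add: h_def)
qed

lemma det_on_empty: "det_on {} M = 1"
  unfolding det_on_def by (simp add: permutes_empty)

lemma pd_det_pos:
  assumes "finite R" "pd R M" "symm R M"
  shows "det_on R M > 0"
  using assms
proof (induction R rule: finite_induct)
  case empty thus ?case by (simp add: det_on_empty)
next
  case (insert u S)
  have pdS: "pd S M" by (rule pd_subset[OF _ _ insert.prems(1)]) (use insert in auto)
  have symS: "symm S M" by (rule symm_subset[OF insert.prems(2)]) auto
  obtain h where h: "h u = 1" "det_on (insert u S) M = qf (insert u S) M h * det_on (insert u S - {u}) M"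
    using schur_min[OF _ insert.prems, of u] insert by blast
  have "qf (insert u S) M h > 0" using insert.prems(1) h(1) unfolding pd_def by force
  moreover have "insert u S - {u} = S" using insert by auto
  ultimately show ?case using h(2) insert.IH[OF pdS symS] by simp
qed




definition dlt :: "'v \<Rightarrow> 'v \<Rightarrow> real" where
  "dlt x z = (if z = x then 1 else 0)"

definition Lm :: "'e set \<Rightarrow> ('e \<Rightarrow> 'v \<times> 'v) \<Rightarrow> ('e \<Rightarrow> real) \<Rightarrow> 'v \<Rightarrow> 'v \<Rightarrow> real" where
  "Lm Ed en c y x = lap Ed en c (dlt x) y"

definition En :: "'e set \<Rightarrow> ('e \<Rightarrow> 'v \<times> 'v) \<Rightarrow> ('e \<Rightarrow> real) \<Rightarrow> ('v \<Rightarrow> real) \<Rightarrow> real" where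
  "En Ed en c g = (\<Sum>e\<in>Ed. c e * (g (fst (en e)) - g (snd (en e)))^2)"

definition inV :: "'v set \<Rightarrow> 'e set \<Rightarrow> ('e \<Rightarrow> 'v \<times> 'v) \<Rightarrow> bool" where
  "inV W Ed en \<longleftrightarrow> (\<forall>e\<in>Ed. fst (en e) \<in> W \<and> snd (en e) \<in> W)"

lemma lap_mv:
  assumes fW: "finite W" and ends: "inV W Ed en"
  shows "lap Ed en c h y = mv W (Lm Ed en c) h y"
proof -
  have "mv W (Lm Ed en c) h y = (\<Sum>x\<in>W. \<Sum>e\<in>Ed.
      ((if fst (en e) = y then c e * (dlt x y - dlt x (snd (en e))) else 0)
     + (if snd (en e) = y then c e * (dlt x y - dlt x (fst (en e))) else 0)) * h x)"
    unfolding mv_def Lm_def lap_def by (simp add: sum_distrib_right)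
  also have "\<dots> = (\<Sum>e\<in>Ed. \<Sum>x\<in>W.
      ((if fst (en e) = y then c e * (dlt x y - dlt x (snd (en e))) else 0)
     + (if snd (en e) = y then c e * (dlt x y - dlt x (fst (en e))) else 0)) * h x)"
    by (rule sum.swap)
  also have "\<dots> = lap Ed en c h y"
    unfolding lap_def
  proof (rule sum.cong[OF refl])
    fix e assume e: "e \<in> Ed"
    have a: "fst (en e) \<in> W" and b: "snd (en e) \<in> W" using ends e unfolding inV_def by auto
    have d: "(\<Sum>x\<in>W. dlt x z * h x) = h z" if "z \<in> W" for z
    proof -
      have "(\<Sum>x\<in>W. dlt x z * h x) = (\<Sum>x\<in>W. if z = x then h x else 0)"
        by (rule sum.cong) (auto simp: dlt_def)
      thus ?thesis using that fW by simp
    qed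
    show "(\<Sum>x\<in>W. ((if fst (en e) = y then c e * (dlt x y - dlt x (snd (en e))) else 0)
     + (if snd (en e) = y then c e * (dlt x y - dlt x (fst (en e))) else 0)) * h x)
      = (if fst (en e) = y then c e * (h y - h (snd (en e))) else 0)
      + (if snd (en e) = y then c e * (h y - h (fst (en e))) else 0)"
    proof -
      have "(\<Sum>x\<in>W. ((if fst (en e) = y then c e * (dlt x y - dlt x (snd (en e))) else 0)
     + (if snd (en e) = y then c e * (dlt x y - dlt x (fst (en e))) else 0)) * h x)
       = (if fst (en e) = y then c e * ((\<Sum>x\<in>W. dlt x y * h x) - (\<Sum>x\<in>W. dlt x (snd (en e)) * h x)) else 0)
       + (if snd (en e) = y then c e * ((\<Sum>x\<in>W. dlt x y * h x) - (\<Sum>x\<in>W. dlt x (fst (en e)) * h x)) else 0)"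
        by (simp add: sum.distrib sum_subtractf sum_distrib_left algebra_simps)
      thus ?thesis using a b d by auto
    qed
  qed
  finally show ?thesis by simp
qed

lemma energy_lap:
  assumes fW: "finite W" and fE: "finite Ed" and ends: "inV W Ed en"
  shows "(\<Sum>y\<in>W. g y * lap Ed en c g y) = En Ed en c g"
proof -
  have "(\<Sum>y\<in>W. g y * lap Ed en c g y) = (\<Sum>y\<in>W. \<Sum>e\<in>Ed. g y *
      ((if fst (en e) = y then c e * (g y - g (snd (en e))) else 0)
    + (if snd (en e) = y then c e * (g y - g (fst (en e))) else 0)))"
    unfolding lap_def sum_distrib_left ..
  also have "\<dots> = (\<Sum>e\<in>Ed. \<Sum>y\<in>W. g y *
      ((if fst (en e) = y then c e * (g y - g (snd (en e))) else 0)
    + (if snd (en e) = y then c e * (g y - g (fst (en e))) else 0)))"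
    by (rule sum.swap)
  also have "\<dots> = En Ed en c g"
    unfolding En_def
  proof (rule sum.cong[OF refl])
    fix e assume e: "e \<in> Ed"
    have a: "fst (en e) \<in> W" and b: "snd (en e) \<in> W" using ends e unfolding inV_def by auto
    have "(\<Sum>y\<in>W. g y *
      ((if fst (en e) = y then c e * (g y - g (snd (en e))) else 0)
    + (if snd (en e) = y then c e * (g y - g (fst (en e))) else 0)))
      = (\<Sum>y\<in>W. if fst (en e) = y then g y * (c e * (g y - g (snd (en e)))) else 0)
      + (\<Sum>y\<in>W. if snd (en e) = y then g y * (c e * (g y - g (fst (en e)))) else 0)"
      by (simp add: sum.distrib[symmetric] distrib_left) (rule sum.cong, auto)
    also have "\<dots> = g (fst (en e)) * (c e * (g (fst (en e)) - g (snd (en e))))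
       + g (snd (en e)) * (c e * (g (snd (en e)) - g (fst (en e))))"
      using a b fW by simp
    also have "\<dots> = c e * (g (fst (en e)) - g (snd (en e)))^2"
      by (simp add: power2_eq_square algebra_simps)
    finally show "(\<Sum>y\<in>W. g y *
      ((if fst (en e) = y then c e * (g y - g (snd (en e))) else 0)
    + (if snd (en e) = y then c e * (g y - g (fst (en e))) else 0)))
      = c e * (g (fst (en e)) - g (snd (en e)))^2" .
  qed
  finally show ?thesis .
qed

lemma qf_En:
  assumes fW: "finite W" and fE: "finite Ed" and ends: "inV W Ed en"
  shows "qf W (Lm Ed en c) g = En Ed en c g"
proof -
  have "qf W (Lm Ed en c) g = (\<Sum>y\<in>W. g y * mv W (Lm Ed en c) g y)" by (rule qf_mv)
  also have "\<dots> = (\<Sum>y\<in>W. g y * lap Ed en c g y)"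
    by (rule sum.cong[OF refl]) (simp only: lap_mv[OF fW ends])
  also have "\<dots> = En Ed en c g" by (rule energy_lap[OF fW fE ends])
  finally show ?thesis .
qed

lemma Lm_symm: "Lm Ed en c y x = Lm Ed en c x y"
  unfolding Lm_def lap_def dlt_def by (rule sum.cong) auto

lemma lap_const: "lap Ed en c (\<lambda>_. a) y = 0"
  unfolding lap_def by (rule sum.neutral) simp

lemma En_nonneg:
  assumes "\<And>e. e \<in> Ed \<Longrightarrow> c e \<ge> 0"
  shows "En Ed en c g \<ge> 0"
  unfolding En_def using assms by (intro sum_nonneg) simp

lemma En_zero:
  assumes fE: "finite Ed" and pos: "\<And>e. e \<in> Ed \<Longrightarrow> c e > 0" and z: "En Ed en c g = 0"
  shows "\<forall>e\<in>Ed. g (fst (en e)) = g (snd (en e))"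
proof -
  have nn: "\<And>x. x \<in> Ed \<Longrightarrow> 0 \<le> c x * (g (fst (en x)) - g (snd (en x)))^2"
    using pos by (meson less_imp_le mult_nonneg_nonneg zero_le_power2)
  have all: "\<forall>x\<in>Ed. c x * (g (fst (en x)) - g (snd (en x)))^2 = 0"
  proof -
    have "(\<Sum>x\<in>Ed. c x * (g (fst (en x)) - g (snd (en x)))^2) = 0
        \<longleftrightarrow> (\<forall>x\<in>Ed. c x * (g (fst (en x)) - g (snd (en x)))^2 = 0)"
      by (rule sum_nonneg_eq_0_iff[OF fE nn])
    thus ?thesis using z unfolding En_def by blast
  qed
  show ?thesis
  proof
    fix e assume e: "e \<in> Ed"
    show "g (fst (en e)) = g (snd (en e))" using all e pos[OF e] by auto
  qed
qed

lemma conn_const: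
  assumes conn: "(x, y) \<in> (edge_rel Ed en)\<^sup>*"
    and eq: "\<forall>e\<in>Ed. g (fst (en e)) = g (snd (en e))"
  shows "g x = g y"
  using conn
proof (induction rule: rtrancl_induct)
  case base thus ?case by simp
next
  case (step y z)
  have "g y = g z" using step(2) eq unfolding edge_rel_def by (auto simp: prod_eq_iff)
  thus ?case using step by simp
qed




lemma det_on_col_add_multiple:
  assumes fin: "finite I" and u: "u \<in> I" and J: "J \<subseteq> I - {u}" and fJ: "finite J"
  shows "det_on I (\<lambda>i j. if j \<in> J then M i j + a j * M i u else M i j) = det_on I M"
  using fJ J
proof (induction J rule: finite_induct)
  case empty thus ?case by simp
next
  case (insert j J)
  let ?MJ = "\<lambda>i j. if j \<in> J then M i j + a j * M i u else M i j"
  have jI: "j \<in> I" and ju: "j \<noteq> u" and uJ: "u \<notin> J" using insert by auto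
  define h where "h x = (if x = j then 1 else 0) + (if x = u then a j else 0)" for x
  have s: "(\<Sum>x\<in>I. h x * ?MJ i x) = M i j + a j * M i u" for i
  proof -
    have "(\<Sum>x\<in>I. h x * ?MJ i x) = (\<Sum>x\<in>I. (if x = j then ?MJ i x else 0) + (if x = u then a j * ?MJ i x else 0))"
      by (rule sum.cong) (use ju in \<open>auto simp: h_def\<close>)
    also have "\<dots> = ?MJ i j + a j * ?MJ i u"
      using fin jI u by (simp add: sum.distrib)
    also have "\<dots> = M i j + a j * M i u" using insert.hyps(2) uJ by simp
    finally show ?thesis .
  qed
  have "det_on I (\<lambda>i k. if k = j then (\<Sum>x\<in>I. h x * ?MJ i x) else ?MJ i k) = h j * det_on I ?MJ"
    by (rule det_on_colop[OF fin jI])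
  moreover have "(\<lambda>i k. if k = j then (\<Sum>x\<in>I. h x * ?MJ i x) else ?MJ i k)
      = (\<lambda>i k. if k \<in> insert j J then M i k + a k * M i u else M i k)"
    using s insert.hyps(2) uJ by (auto simp: fun_eq_iff)
  moreover have "h j = 1" using ju by (simp add: h_def)
  ultimately show ?case using insert by simp
qed

lemma det_on_add_rowsum:
  assumes fin: "finite R"
  shows "det_on R (\<lambda>y x. A y x + (\<Sum>z\<in>R. A y z)) = (1 + real (card R)) * det_on R A"
proof (cases "R = {}")
  case True thus ?thesis by (simp add: det_on_empty)
next
  case False
  then obtain x1 where x1: "x1 \<in> R" by blast
  define n where "n = 1 + real (card R)"
  have npos: "n > 0" by (simp add: n_def)
  define \<sigma> where "\<sigma> y = (\<Sum>z\<in>R. A y z)" for y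
  let ?N = "\<lambda>y x. A y x + \<sigma> y"
  have "det_on R (\<lambda>i j. if j = x1 then (\<Sum>x\<in>R. 1 * ?N i x) else ?N i j) = 1 * det_on R ?N"
    by (rule det_on_colop[OF fin x1])
  moreover have sN: "(\<Sum>x\<in>R. 1 * ?N i x) = n * \<sigma> i" for i
    by (simp add: sum.distrib n_def \<sigma>_def algebra_simps)
  moreover have "(\<lambda>i j. if j = x1 then (\<Sum>x\<in>R. 1 * ?N i x) else ?N i j)
     = (\<lambda>i j. if j = x1 then n * \<sigma> i else ?N i j)"
    by (rule ext, rule ext) (simp only: sN)
  ultimately have e1: "det_on R ?N = det_on R (\<lambda>i j. if j = x1 then n * \<sigma> i else ?N i j)" by simp
  let ?N1 = "\<lambda>i j. if j = x1 then n * \<sigma> i else ?N i j"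
  have "det_on R (\<lambda>i j. if j \<in> R - {x1} then ?N1 i j + (- 1 / n) * ?N1 i x1 else ?N1 i j) = det_on R ?N1"
    by (rule det_on_col_add_multiple[OF fin x1]) (use fin in auto)
  moreover have "(\<lambda>i j. if j \<in> R - {x1} then ?N1 i j + (- 1 / n) * ?N1 i x1 else ?N1 i j)
      = (\<lambda>i j. if j \<in> R - {x1} then A i j else ?N1 i j)"
  proof (rule ext, rule ext)
    fix i j
    show "(if j \<in> R - {x1} then ?N1 i j + (- 1 / n) * ?N1 i x1 else ?N1 i j)
      = (if j \<in> R - {x1} then A i j else ?N1 i j)"
    proof (cases "j \<in> R - {x1}")
      case True
      hence "j \<noteq> x1" by simp
      hence "?N1 i j + (- 1 / n) * ?N1 i x1 = A i j + \<sigma> i - (n * \<sigma> i) / n" by simp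
      also have "\<dots> = A i j" using npos by simp
      finally show ?thesis using True by simp
    qed simp
  qed
  moreover have "det_on R (\<lambda>i j. if j \<in> R - {x1} then A i j else ?N1 i j)
      = det_on R (\<lambda>i j. if j = x1 then n * \<sigma> i else A i j)"
    by (rule det_on_cong) auto
  ultimately have e2: "det_on R ?N1 = det_on R (\<lambda>i j. if j = x1 then n * \<sigma> i else A i j)" by simp
  have e3: "det_on R (\<lambda>i j. if j = x1 then n * \<sigma> i else A i j) = n * det_on R (\<lambda>i j. if j = x1 then \<sigma> i else A i j)"
    by (rule det_on_col_scale[OF fin x1])
  have "det_on R (\<lambda>i j. if j = x1 then (\<Sum>x\<in>R. 1 * A i x) else A i j) = 1 * det_on R A"
    by (rule det_on_colop[OF fin x1])
  moreover have "(\<lambda>i j. if j = x1 then (\<Sum>x\<in>R. 1 * A i x) else A i j) = (\<lambda>i j. if j = x1 then \<sigma> i else A i j)"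
    by (rule ext, rule ext) (simp add: \<sigma>_def)
  ultimately have e4: "det_on R (\<lambda>i j. if j = x1 then \<sigma> i else A i j) = det_on R A"
    by simp
  have "det_on R ?N = n * det_on R A" using e1 e2 e3 e4 by metis
  moreover have "(\<lambda>y x. A y x + (\<Sum>z\<in>R. A y z)) = ?N" by (simp add: \<sigma>_def)
  ultimately show ?thesis by (simp add: n_def)
qed

lemma lap_diff: "lap Ed en c (\<lambda>z. g z - h z) y = lap Ed en c g y - lap Ed en c h y"
  unfolding lap_def sum_subtractf[symmetric] by (rule sum.cong) (auto simp: algebra_simps)

lemma det_lap_eq:
  assumes fW: "finite W" and ne: "W \<noteq> {}" and fE: "finite Ed" and ends: "inV W Ed en"
  shows "det_lap W Ed en c = real (card W) * det_on (W - {SOME x. x \<in> W}) (Lm Ed en c)"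
proof -
  define x0 where "x0 = (SOME x. x \<in> W)"
  have x0: "x0 \<in> W" unfolding x0_def using ne by (simp add: some_in_eq)
  define R where "R = W - {x0}"
  have fR: "finite R" using fW by (simp add: R_def)
  have rs: "Lm Ed en c y x0 = - (\<Sum>z\<in>R. Lm Ed en c y z)" for y
  proof -
    have "(\<Sum>z\<in>W. Lm Ed en c y z) = mv W (Lm Ed en c) (\<lambda>_. 1) y" by (simp add: mv_def)
    also have "\<dots> = lap Ed en c (\<lambda>_. 1) y" by (rule lap_mv[OF fW ends, symmetric])
    also have "\<dots> = 0" by (rule lap_const)
    finally have "(\<Sum>z\<in>W. Lm Ed en c y z) = 0" .
    moreover have "(\<Sum>z\<in>W. Lm Ed en c y z) = Lm Ed en c y x0 + (\<Sum>z\<in>R. Lm Ed en c y z)"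
      unfolding R_def using sum.remove[OF fW x0] by simp
    ultimately show ?thesis by simp
  qed
  have "det_lap W Ed en c = det_on R (\<lambda>y x. Lm Ed en c y x + (\<Sum>z\<in>R. Lm Ed en c y z))"
    unfolding det_lap_def Let_def x0_def[symmetric] R_def[symmetric]
  proof (rule det_on_cong)
    fix y x
    have "lap Ed en c (\<lambda>z. (if z = x then 1 else 0) - (if z = x0 then 1 else 0)) y
        = lap Ed en c (\<lambda>z. dlt x z - dlt x0 z) y" by (simp add: dlt_def)
    also have "\<dots> = Lm Ed en c y x - Lm Ed en c y x0" unfolding Lm_def by (rule lap_diff)
    finally show "lap Ed en c (\<lambda>z. (if z = x then 1 else 0) - (if z = x0 then 1 else 0)) y
        = Lm Ed en c y x + (\<Sum>z\<in>R. Lm Ed en c y z)" using rs by simp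
  qed
  also have "\<dots> = (1 + real (card R)) * det_on R (Lm Ed en c)"
    by (rule det_on_add_rowsum[OF fR])
  also have "1 + real (card R) = real (card W)"
  proof -
    have "card W > 0" using fW x0 card_gt_0_iff by blast
    thus ?thesis unfolding R_def using fW x0 by (simp add: card_Diff_singleton of_nat_diff)
  qed
  finally show ?thesis unfolding x0_def R_def .
qed




lemma qf_R_En:
  assumes fW: "finite W" and fE: "finite Ed" and ends: "inV W Ed en" and x0: "x0 \<in> W"
  shows "qf (W - {x0}) (Lm Ed en c) h = En Ed en c (\<lambda>z. if z = x0 then 0 else h z)"
proof -
  let ?h = "\<lambda>z. if z = x0 then 0 else h z"
  have "qf (W - {x0}) (Lm Ed en c) h = qf (W - {x0}) (Lm Ed en c) ?h" by (rule qf_cong) simp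
  also have "\<dots> = qf W (Lm Ed en c) ?h" by (rule qf_restrict[symmetric]) (use fW in auto)
  also have "\<dots> = En Ed en c ?h" by (rule qf_En[OF fW fE ends])
  finally show ?thesis .
qed

lemma lap_pd:
  assumes fW: "finite W" and fE: "finite Ed" and ends: "inV W Ed en"
    and conn: "\<forall>x\<in>W. \<forall>y\<in>W. (x, y) \<in> (edge_rel Ed en)\<^sup>*" and x0: "x0 \<in> W"
    and pos: "\<And>e. e \<in> Ed \<Longrightarrow> c e > 0"
  shows "pd (W - {x0}) (Lm Ed en c)"
  unfolding pd_def
proof (intro allI impI)
  fix h :: "_ \<Rightarrow> real" assume "\<exists>x\<in>W - {x0}. h x \<noteq> 0"
  then obtain x where x: "x \<in> W" "x \<noteq> x0" "h x \<noteq> 0" by blast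
  let ?h = "\<lambda>z. if z = x0 then 0 else h z"
  have q: "qf (W - {x0}) (Lm Ed en c) h = En Ed en c ?h" by (rule qf_R_En[OF fW fE ends x0])
  have nn: "En Ed en c ?h \<ge> 0" by (rule En_nonneg) (use pos in \<open>auto intro: less_imp_le\<close>)
  have "En Ed en c ?h \<noteq> 0"
  proof
    assume "En Ed en c ?h = 0"
    from En_zero[OF fE pos this] have "\<forall>e\<in>Ed. ?h (fst (en e)) = ?h (snd (en e))" .
    hence "?h x0 = ?h x" using conn x0 x(1) by (intro conn_const) auto
    thus False using x by simp
  qed
  thus "qf (W - {x0}) (Lm Ed en c) h > 0" using q nn by simp
qed

lemma Lm_symmR: "symm R (Lm Ed en c)"
  unfolding symm_def by (auto intro: Lm_symm)

lemma det_lap_pos: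
  assumes G: "connected_mgraph W Ed en" and pos: "\<And>e. e \<in> Ed \<Longrightarrow> c e > 0"
  shows "det_lap W Ed en c > 0"
proof -
  have fW: "finite W" and fE: "finite Ed" and ends: "inV W Ed en" and ne: "W \<noteq> {}"
    and conn: "\<forall>x\<in>W. \<forall>y\<in>W. (x, y) \<in> (edge_rel Ed en)\<^sup>*"
    using G unfolding connected_mgraph_def finite_mgraph_def inV_def by auto
  define x0 where "x0 = (SOME x. x \<in> W)"
  have x0: "x0 \<in> W" unfolding x0_def using ne by (simp add: some_in_eq)
  have "det_on (W - {x0}) (Lm Ed en c) > 0"
    by (rule pd_det_pos) (use fW lap_pd[OF fW fE ends conn x0 pos] Lm_symmR in auto)
  moreover have "card W > 0" using fW x0 card_gt_0_iff by blast
  ultimately show ?thesis using det_lap_eq[OF fW ne fE ends] unfolding x0_def by simp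
qed




definition Mt :: "('i \<Rightarrow> 'i \<Rightarrow> real) \<Rightarrow> 'i \<Rightarrow> real \<Rightarrow> 'i \<Rightarrow> 'i \<Rightarrow> real" where
  "Mt M0 p t = (\<lambda>i j. M0 i j + (if i = p \<and> j = p then t else 0))"

lemma qf_Mt:
  assumes fin: "finite R" and p: "p \<in> R"
  shows "qf R (Mt M0 p t) h = qf R M0 h + t * (h p)^2"
proof -
  have "qf R (Mt M0 p t) h = (\<Sum>y\<in>R. \<Sum>x\<in>R. h y * M0 y x * h x + (if y = p then (if x = p then h y * t * h x else 0) else 0))"
    unfolding qf_def Mt_def by (rule sum.cong[OF refl], rule sum.cong[OF refl]) (auto simp: algebra_simps)
  also have "\<dots> = qf R M0 h + (\<Sum>y\<in>R. (if y = p then (\<Sum>x\<in>R. if x = p then h y * t * h x else 0) else 0))"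
    unfolding qf_def by (simp add: sum.distrib) (rule sum.cong; simp)
  also have "\<dots> = qf R M0 h + t * (h p)^2"
    using fin p by (simp add: power2_eq_square algebra_simps)
  finally show ?thesis .
qed

lemma symm_Mt: "symm R M0 \<Longrightarrow> symm R (Mt M0 p t)"
  unfolding symm_def Mt_def by auto

lemma rank1_pivot:
  assumes fin: "finite R" and p: "p \<in> R" and sym: "symm R M0"
    and pd: "\<And>t. t > 0 \<Longrightarrow> pd R (Mt M0 p t)"
  shows "\<exists>K>0. \<exists>s0. (\<forall>t>0. det_on R (Mt M0 p t) = K * (s0 + t))
     \<and> (\<forall>h. h p = 1 \<longrightarrow> s0 \<le> qf R M0 h) \<and> (\<exists>h. h p = 1 \<and> qf R M0 h = s0)"
proof -
  have pd1: "pd R (Mt M0 p 1)" by (rule pd) simp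
  obtain h1 where h1: "h1 p = 1" "det_on R (Mt M0 p 1) = qf R (Mt M0 p 1) h1 * det_on (R - {p}) (Mt M0 p 1)"
      "\<forall>g. g p = 1 \<longrightarrow> qf R (Mt M0 p 1) h1 \<le> qf R (Mt M0 p 1) g"
    using schur_min[OF fin pd1 symm_Mt[OF sym] p] by blast
  define K where "K = det_on (R - {p}) (Mt M0 p 1)"
  have Kt: "det_on (R - {p}) (Mt M0 p t) = K" for t
    unfolding K_def by (rule det_on_cong) (auto simp: Mt_def)
  have Kpos: "K > 0"
    unfolding K_def
    by (rule pd_det_pos) (use fin pd_subset[OF fin _ pd1] symm_subset[OF symm_Mt[OF sym]] in auto)
  define s0 where "s0 = qf R M0 h1"
  have q1: "qf R (Mt M0 p 1) g = qf R M0 g + 1" if "g p = 1" for g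
    using qf_Mt[OF fin p, of M0 1 g] that by simp
  have min: "s0 \<le> qf R M0 h" if "h p = 1" for h
    using h1(3) q1[of h, OF that] q1[of h1, OF h1(1)] that unfolding s0_def by force
  have det: "det_on R (Mt M0 p t) = K * (s0 + t)" if t: "t > 0" for t
  proof -
    obtain ht where ht: "ht p = 1" "det_on R (Mt M0 p t) = qf R (Mt M0 p t) ht * det_on (R - {p}) (Mt M0 p t)"
      "\<forall>g. g p = 1 \<longrightarrow> qf R (Mt M0 p t) ht \<le> qf R (Mt M0 p t) g"
      using schur_min[OF fin pd[OF t] symm_Mt[OF sym] p] by blast
    have qt: "qf R (Mt M0 p t) g = qf R M0 g + t" if "g p = 1" for g
      using qf_Mt[OF fin p, of M0 t g] that by simp
    have "qf R M0 ht \<le> s0" using ht(3) h1(1) qt[of ht, OF ht(1)] qt[of h1, OF h1(1)] unfolding s0_def by force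
    moreover have "s0 \<le> qf R M0 ht" by (rule min[of ht, OF ht(1)])
    ultimately have "qf R M0 ht = s0" by simp
    thus ?thesis using ht(2) qt[of ht, OF ht(1)] Kt[of t] by simp
  qed
  show ?thesis using Kpos det min h1(1) unfolding s0_def by blast
qed

lemma transfer_min:
  assumes AL: "\<exists>K>0. \<exists>s0. (\<forall>t>0. D t = K * (s0 + t))
     \<and> (\<forall>h. h p = 1 \<longrightarrow> s0 \<le> Q h) \<and> (\<exists>h. h p = 1 \<and> Q h = s0)"
    and i: "\<And>h. h p = 1 \<Longrightarrow> \<exists>g. P g \<and> E g = Q h"
    and ii: "\<And>g. P g \<Longrightarrow> \<exists>h. h p = 1 \<and> Q h = E g"
  shows "\<exists>K>0. \<exists>m0. (\<forall>t>0. D t = K * (m0 + t))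
     \<and> (\<forall>g. P g \<longrightarrow> m0 \<le> E g) \<and> (\<exists>g. P g \<and> E g = m0)"
proof -
  obtain K s0 where K: "K > 0" "\<forall>t>0. D t = K * (s0 + t)" "\<forall>h. h p = 1 \<longrightarrow> s0 \<le> Q h"
    and ex: "\<exists>h. h p = 1 \<and> Q h = s0" using AL by blast
  have a: "\<forall>g. P g \<longrightarrow> s0 \<le> E g" using ii K(3) by metis
  have b: "\<exists>g. P g \<and> E g = s0" using ex i by metis
  show ?thesis using K a b by blast
qed




definition wv :: "'v \<Rightarrow> 'v \<Rightarrow> 'v \<Rightarrow> real" where
  "wv u v z = (if z = u then 1 else 0) - (if z = v then 1 else 0)"

lemma lap_upd:
  assumes fE: "finite Ed" and f: "f \<in> Ed" and uv: "en f = (u, v)"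
  shows "lap Ed en (c(f := t)) h y = lap (Ed - {f}) en c h y
     + ((if u = y then t * (h y - h v) else 0) + (if v = y then t * (h y - h u) else 0))"
proof -
  have "lap Ed en (c(f := t)) h y = ((if u = y then t * (h y - h v) else 0) + (if v = y then t * (h y - h u) else 0))
     + lap (Ed - {f}) en (c(f := t)) h y"
    unfolding lap_def by (subst sum.remove[OF fE f]) (simp add: uv)
  moreover have "lap (Ed - {f}) en (c(f := t)) h y = lap (Ed - {f}) en c h y"
    unfolding lap_def by (rule sum.cong) auto
  ultimately show ?thesis by simp
qed

lemma Lm_upd:
  assumes fE: "finite Ed" and f: "f \<in> Ed" and uv: "en f = (u, v)"
  shows "Lm Ed en (c(f := t)) y x = Lm (Ed - {f}) en c y x + t * wv u v y * wv u v x"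
  unfolding Lm_def lap_upd[where en=en and f=f and Ed=Ed, OF fE f uv] by (auto simp: wv_def dlt_def)

lemma En_upd:
  assumes fE: "finite Ed" and f: "f \<in> Ed" and uv: "en f = (u, v)"
  shows "En Ed en (c(f := t)) g = En (Ed - {f}) en c g + t * (g u - g v)^2"
proof -
  have "En Ed en (c(f := t)) g = t * (g u - g v)^2 + En (Ed - {f}) en (c(f := t)) g"
    unfolding En_def by (subst sum.remove[OF fE f]) (simp add: uv)
  moreover have "En (Ed - {f}) en (c(f := t)) g = En (Ed - {f}) en c g"
    unfolding En_def by (rule sum.cong) auto
  ultimately show ?thesis by simp
qed

lemma En_affine: "En Ed en c (\<lambda>z. a - g z) = En Ed en c g"
  unfolding En_def by (rule sum.cong) (auto simp: power2_eq_square algebra_simps)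

lemma En_shift: "En Ed en c (\<lambda>z. g z - a) = En Ed en c g"
  unfolding En_def by (rule sum.cong) (auto simp: power2_eq_square algebra_simps)

lemma En_neg: "En Ed en c (\<lambda>z. - g z) = En Ed en c g"
  unfolding En_def by (rule sum.cong) (auto simp: power2_eq_square algebra_simps)

definition Tm :: "'i \<Rightarrow> 'i \<Rightarrow> ('i \<Rightarrow> 'i \<Rightarrow> real) \<Rightarrow> 'i \<Rightarrow> 'i \<Rightarrow> real" where
  "Tm u v M = (\<lambda>y x. M y x + (if y = u then M v x else 0) + (if x = u then M y v else 0)
      + (if y = u then (if x = u then M v v else 0) else 0))"

definition Pv :: "'i \<Rightarrow> 'i \<Rightarrow> ('i \<Rightarrow> real) \<Rightarrow> 'i \<Rightarrow> real" where
  "Pv u v h = (\<lambda>z. h z + (if z = v then h u else 0))"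

lemma det_T:
  assumes fin: "finite R" and u: "u \<in> R" and v: "v \<in> R" and uv: "u \<noteq> v"
  shows "det_on R (Tm u v M) = det_on R M"
proof -
  define hh where "hh x = (if x = u then 1 else 0) + (if x = v then (1::real) else 0)" for x
  have hs: "(\<Sum>x\<in>R. hh x * F x) = F u + F v" for F
  proof -
    have "(\<Sum>x\<in>R. hh x * F x) = (\<Sum>x\<in>R. (if x = u then F x else 0) + (if x = v then F x else 0))"
      by (rule sum.cong) (auto simp: hh_def)
    thus ?thesis using fin u v by (simp add: sum.distrib)
  qed
  have hu: "hh u = 1" using uv by (simp add: hh_def)
  define M1 where "M1 = (\<lambda>i j. if i = u then (\<Sum>x\<in>R. hh x * M x j) else M i j)"
  have d1: "det_on R M1 = det_on R M" unfolding M1_def using det_on_rowop[OF fin u, of hh M] hu by simp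
  define M2 where "M2 = (\<lambda>i j. if j = u then (\<Sum>x\<in>R. hh x * M1 i x) else M1 i j)"
  have d2: "det_on R M2 = det_on R M1" unfolding M2_def using det_on_colop[OF fin u, of hh M1] hu by simp
  have "M2 = Tm u v M"
    unfolding M2_def M1_def Tm_def hs using uv by (auto simp: fun_eq_iff)
  thus ?thesis using d1 d2 by simp
qed

lemma if_mult0: "(if P then a else 0) * (b::real) = (if P then a * b else 0)"
  "(b::real) * (if P then a else 0) = (if P then b * a else 0)" by auto

lemma sum_if_const: "(\<Sum>x\<in>A. if P then f x else (0::real)) = (if P then sum f A else 0)"
  by auto

lemma qf_T:
  assumes fin: "finite R" and u: "u \<in> R" and v: "v \<in> R" and uv: "u \<noteq> v"
  shows "qf R (Tm u v M) h = qf R M (Pv u v h)"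
proof -
  have "qf R (Tm u v M) h = qf R M h + h u * (\<Sum>x\<in>R. M v x * h x) + h u * (\<Sum>y\<in>R. h y * M y v) + h u * h u * M v v"
    unfolding qf_def Tm_def
    using fin u v by (simp add: distrib_left distrib_right sum.distrib if_mult0 sum_if_const sum_distrib_left algebra_simps)
  moreover have "qf R M (Pv u v h) = qf R M h + h u * (\<Sum>x\<in>R. M v x * h x) + h u * (\<Sum>y\<in>R. h y * M y v) + h u * h u * M v v"
    unfolding qf_def Pv_def
    using fin u v by (simp add: distrib_left distrib_right sum.distrib if_mult0 sum_if_const sum_distrib_left algebra_simps)
  ultimately show ?thesis by simp
qed

lemma symm_T: "symm R M \<Longrightarrow> u \<in> R \<Longrightarrow> v \<in> R \<Longrightarrow> symm R (Tm u v M)"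
  unfolding symm_def Tm_def by auto

lemma pd_cong:
  assumes "pd R M" and "\<And>i j. i \<in> R \<Longrightarrow> j \<in> R \<Longrightarrow> M i j = N i j"
  shows "pd R N"
proof -
  have "qf R M h = qf R N h" for h unfolding qf_def using assms(2) by simp
  thus ?thesis using assms(1) unfolding pd_def by simp
qed




lemma pg2:
  assumes G: "connected_mgraph W Ed en" and f: "f \<in> Ed" and uv: "en f = (u, v)" and neq: "u \<noteq> v"
    and pos: "\<And>e. e \<in> Ed - {f} \<Longrightarrow> c e > 0"
  shows "\<exists>K>0. \<exists>m0. (\<forall>t>0. det_lap W Ed en (c(f := t)) = K * (m0 + t))
     \<and> (\<forall>g. g u - g v = 1 \<longrightarrow> m0 \<le> En (Ed - {f}) en c g)
     \<and> (\<exists>g. g u - g v = 1 \<and> En (Ed - {f}) en c g = m0)"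
proof -
  have fW: "finite W" and fE: "finite Ed" and ends: "inV W Ed en" and ne: "W \<noteq> {}"
    and conn: "\<forall>x\<in>W. \<forall>y\<in>W. (x, y) \<in> (edge_rel Ed en)\<^sup>*"
    using G unfolding connected_mgraph_def finite_mgraph_def inV_def by auto
  have uW: "u \<in> W" and vW: "v \<in> W" using ends f uv unfolding inV_def by force+
  have fE0: "finite (Ed - {f})" using fE by simp
  have ends0: "inV W (Ed - {f}) en" using ends unfolding inV_def by auto
  define x0 where "x0 = (SOME x. x \<in> W)"
  have x0: "x0 \<in> W" unfolding x0_def using ne by (simp add: some_in_eq)
  define R where "R = W - {x0}"
  have finR: "finite R" using fW by (simp add: R_def)
  define L0 where "L0 = Lm (Ed - {f}) en c"
  define Lt where "Lt t = Lm Ed en (c(f := t))" for t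
  define E0 where "E0 = En (Ed - {f}) en c"
  define P where "P g = (g u - g v = (1::real))" for g
  have post: "(c(f := t)) e > 0" if "t > 0" "e \<in> Ed" for t e using pos that by auto
  have pdLt: "pd R (Lt t)" if "t > 0" for t
    unfolding R_def Lt_def by (rule lap_pd[OF fW fE ends conn x0]) (use post that in auto)
  have LtE: "Lt t y x = L0 y x + t * wv u v y * wv u v x" for t y x
    unfolding Lt_def L0_def by (rule Lm_upd[where en=en and f=f and Ed=Ed, OF fE f uv])
  have qR: "qf R L0 h = E0 (\<lambda>z. if z = x0 then 0 else h z)" for h
    unfolding R_def L0_def E0_def by (rule qf_R_En[OF fW fE0 ends0 x0])
  have symL0: "symm R L0" unfolding L0_def by (rule Lm_symmR)
  have main: "\<exists>K>0. \<exists>m0. (\<forall>t>0. det_on R (Lt t) = K * (m0 + t))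
     \<and> (\<forall>g. P g \<longrightarrow> m0 \<le> E0 g) \<and> (\<exists>g. P g \<and> E0 g = m0)"
  proof (cases "x0 = v")
    case True
    have uR: "u \<in> R" using uW neq True by (simp add: R_def)
    have eq: "Lt t y x = Mt L0 u t y x" if "y \<in> R" "x \<in> R" for t y x
      using that True unfolding LtE Mt_def wv_def R_def by auto
    have pdA: "pd R (Mt L0 u t)" if "t > 0" for t by (rule pd_cong[OF pdLt[OF that]]) (rule eq)
    obtain K s0 where Ks: "K > 0" "\<forall>t>0. det_on R (Mt L0 u t) = K * (s0 + t)"
      "\<forall>h. h u = 1 \<longrightarrow> s0 \<le> qf R L0 h" "\<exists>h. h u = 1 \<and> qf R L0 h = s0"
      using rank1_pivot[OF finR uR symL0 pdA] by blast
    have det: "det_on R (Lt t) = det_on R (Mt L0 u t)" for t by (rule det_on_cong) (rule eq)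
    show ?thesis
    proof (rule transfer_min[where p=u and Q="qf R L0"])
      show "\<exists>K>0. \<exists>s0. (\<forall>t>0. det_on R (Lt t) = K * (s0 + t))
        \<and> (\<forall>h. h u = 1 \<longrightarrow> s0 \<le> qf R L0 h) \<and> (\<exists>h. h u = 1 \<and> qf R L0 h = s0)"
      proof -
        have "\<forall>t>0. det_on R (Lt t) = K * (s0 + t)" using Ks(2) det by simp
        thus ?thesis using Ks(1,3,4) by blast
      qed
    next
      fix h :: "_ \<Rightarrow> real" assume hu: "h u = 1"
      let ?g = "\<lambda>z. if z = v then 0 else h z"
      have "P ?g" using hu neq by (simp add: P_def)
      moreover have "E0 ?g = qf R L0 h" using qR True by simp
      ultimately show "\<exists>g. P g \<and> E0 g = qf R L0 h" by blast
    next
      fix g assume Pg: "P g"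
      let ?h = "\<lambda>z. g z - g v"
      have "?h u = 1" using Pg by (simp add: P_def)
      moreover have "qf R L0 ?h = E0 g"
      proof -
        have "qf R L0 ?h = E0 (\<lambda>z. if z = x0 then 0 else g z - g v)" by (rule qR)
        also have "(\<lambda>z. if z = x0 then 0 else g z - g v) = (\<lambda>z. g z - g v)" using True by auto
        also have "E0 \<dots> = E0 g" unfolding E0_def by (rule En_shift)
        finally show ?thesis .
      qed
      ultimately show "\<exists>h. h u = 1 \<and> qf R L0 h = E0 g" by (intro exI[of _ ?h]) simp
    qed
  next
    case notv: False
    show ?thesis
    proof (cases "x0 = u")
      case True
      have vR: "v \<in> R" using vW neq True by (simp add: R_def)
      have eq: "Lt t y x = Mt L0 v t y x" if "y \<in> R" "x \<in> R" for t y x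
        using that True neq unfolding LtE Mt_def wv_def R_def by auto
      have pdB: "pd R (Mt L0 v t)" if "t > 0" for t by (rule pd_cong[OF pdLt[OF that]]) (rule eq)
      obtain K s0 where Ks: "K > 0" "\<forall>t>0. det_on R (Mt L0 v t) = K * (s0 + t)"
        "\<forall>h. h v = 1 \<longrightarrow> s0 \<le> qf R L0 h" "\<exists>h. h v = 1 \<and> qf R L0 h = s0"
        using rank1_pivot[OF finR vR symL0 pdB] by blast
      have det: "det_on R (Lt t) = det_on R (Mt L0 v t)" for t by (rule det_on_cong) (rule eq)
      show ?thesis
      proof (rule transfer_min[where p=v and Q="qf R L0"])
        show "\<exists>K>0. \<exists>s0. (\<forall>t>0. det_on R (Lt t) = K * (s0 + t))
          \<and> (\<forall>h. h v = 1 \<longrightarrow> s0 \<le> qf R L0 h) \<and> (\<exists>h. h v = 1 \<and> qf R L0 h = s0)"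
      proof -
        have "\<forall>t>0. det_on R (Lt t) = K * (s0 + t)" using Ks(2) det by simp
        thus ?thesis using Ks(1,3,4) by blast
      qed
      next
        fix h :: "_ \<Rightarrow> real" assume hv: "h v = 1"
        let ?g = "\<lambda>z. - (if z = u then 0 else h z)"
        have "P ?g" using hv neq by (simp add: P_def)
        moreover have "E0 ?g = qf R L0 h"
        proof -
          have "E0 ?g = E0 (\<lambda>z. if z = u then 0 else h z)" unfolding E0_def by (rule En_neg)
          also have "\<dots> = qf R L0 h" using qR True by simp
          finally show ?thesis .
        qed
        ultimately show "\<exists>g. P g \<and> E0 g = qf R L0 h" by blast
      next
        fix g assume Pg: "P g"
        let ?h = "\<lambda>z. g u - g z"
        have "?h v = 1" using Pg by (simp add: P_def)
        moreover have "qf R L0 ?h = E0 g"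
        proof -
          have "qf R L0 ?h = E0 (\<lambda>z. if z = x0 then 0 else g u - g z)" by (rule qR)
          also have "(\<lambda>z. if z = x0 then 0 else g u - g z) = (\<lambda>z. g u - g z)" using True by auto
          also have "E0 \<dots> = E0 g" unfolding E0_def by (rule En_affine)
          finally show ?thesis .
        qed
        ultimately show "\<exists>h. h v = 1 \<and> qf R L0 h = E0 g" by (intro exI[of _ ?h]) simp
      qed
    next
      case notu: False
      have uR: "u \<in> R" and vR: "v \<in> R" using uW vW notu notv by (auto simp: R_def)
      define M0 where "M0 = Tm u v L0"
      have eq: "Tm u v (Lt t) y x = Mt M0 v t y x" for t y x
        using neq unfolding M0_def Tm_def LtE Mt_def wv_def by auto
      have pdT: "pd R (Tm u v (Lt t))" if t: "t > 0" for t
        unfolding pd_def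
      proof (intro allI impI)
        fix h :: "_ \<Rightarrow> real" assume "\<exists>x\<in>R. h x \<noteq> 0"
        then obtain x where x: "x \<in> R" "h x \<noteq> 0" by blast
        have "\<exists>x\<in>R. Pv u v h x \<noteq> 0"
        proof (cases "x = v")
          case False thus ?thesis using x by (intro bexI[of _ x]) (auto simp: Pv_def)
        next
          case True
          show ?thesis
          proof (cases "h u = 0")
            case True thus ?thesis using x \<open>x = v\<close> by (intro bexI[of _ v]) (auto simp: Pv_def)
          next
            case False thus ?thesis using uR neq by (intro bexI[of _ u]) (auto simp: Pv_def)
          qed
        qed
        hence "qf R (Lt t) (Pv u v h) > 0" using pdLt[OF t] unfolding pd_def by blast
        thus "qf R (Tm u v (Lt t)) h > 0" using qf_T[OF finR uR vR neq] by simp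
      qed
      have pdC: "pd R (Mt M0 v t)" if "t > 0" for t by (rule pd_cong[OF pdT[OF that]]) (simp add: eq)
      have symC: "symm R M0" unfolding M0_def by (rule symm_T[OF symL0 uR vR])
      obtain K s0 where Ks: "K > 0" "\<forall>t>0. det_on R (Mt M0 v t) = K * (s0 + t)"
        "\<forall>h. h v = 1 \<longrightarrow> s0 \<le> qf R M0 h" "\<exists>h. h v = 1 \<and> qf R M0 h = s0"
        using rank1_pivot[OF finR vR symC pdC] by blast
      have det: "det_on R (Lt t) = det_on R (Mt M0 v t)" for t
      proof -
        have "det_on R (Lt t) = det_on R (Tm u v (Lt t))" by (rule det_T[symmetric, OF finR uR vR neq])
        also have "\<dots> = det_on R (Mt M0 v t)" by (rule det_on_cong) (simp add: eq)
        finally show ?thesis .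
      qed
      have qT: "qf R M0 h = qf R L0 (Pv u v h)" for h
        unfolding M0_def by (rule qf_T[OF finR uR vR neq])
      show ?thesis
      proof (rule transfer_min[where p=v and Q="qf R M0"])
        show "\<exists>K>0. \<exists>s0. (\<forall>t>0. det_on R (Lt t) = K * (s0 + t))
          \<and> (\<forall>h. h v = 1 \<longrightarrow> s0 \<le> qf R M0 h) \<and> (\<exists>h. h v = 1 \<and> qf R M0 h = s0)"
      proof -
        have "\<forall>t>0. det_on R (Lt t) = K * (s0 + t)" using Ks(2) det by simp
        thus ?thesis using Ks(1,3,4) by blast
      qed
      next
        fix h :: "_ \<Rightarrow> real" assume hv: "h v = 1"
        let ?gz = "\<lambda>z. if z = x0 then 0 else Pv u v h z"
        let ?g = "\<lambda>z. - ?gz z"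
        have "P ?g" using hv neq notu notv by (simp add: P_def Pv_def)
        moreover have "E0 ?g = qf R M0 h"
        proof -
          have "E0 ?g = E0 ?gz" unfolding E0_def by (rule En_neg)
          also have "\<dots> = qf R L0 (Pv u v h)" by (rule qR[symmetric])
          also have "\<dots> = qf R M0 h" by (rule qT[symmetric])
          finally show ?thesis .
        qed
        ultimately show "\<exists>g. P g \<and> E0 g = qf R M0 h" by blast
      next
        fix g assume Pg: "P g"
        define g2 where "g2 z = g x0 - g z" for z
        define h where "h z = g2 z - (if z = v then g2 u else 0)" for z
        have "h v = 1" using Pg by (simp add: P_def h_def g2_def)
        moreover have "qf R M0 h = E0 g"
        proof -
          have Ph: "Pv u v h = g2" using neq by (auto simp: Pv_def h_def fun_eq_iff)
          have "qf R M0 h = qf R L0 g2" using qT Ph by simp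
          also have "\<dots> = E0 (\<lambda>z. if z = x0 then 0 else g2 z)" by (rule qR)
          also have "(\<lambda>z. if z = x0 then 0 else g2 z) = (\<lambda>z. g x0 - g z)" by (auto simp: g2_def)
          also have "E0 \<dots> = E0 g" unfolding E0_def by (rule En_affine)
          finally show ?thesis .
        qed
        ultimately show "\<exists>h. h v = 1 \<and> qf R M0 h = E0 g" by blast
      qed
    qed
  qed
  then obtain K m0 where K: "K > 0" "\<forall>t>0. det_on R (Lt t) = K * (m0 + t)"
    "\<forall>g. P g \<longrightarrow> m0 \<le> E0 g" "\<exists>g. P g \<and> E0 g = m0" by blast
  have cW: "real (card W) > 0" using fW x0 card_gt_0_iff by fastforce
  have "\<forall>t>0. det_lap W Ed en (c(f := t)) = (real (card W) * K) * (m0 + t)"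
    using K(2) det_lap_eq[OF fW ne fE ends] unfolding Lt_def R_def x0_def by simp
  moreover have "real (card W) * K > 0" using cW K(1) by simp
  ultimately show ?thesis using K(3,4) unfolding P_def E0_def by blast
qed




lemma cls_eq:
  assumes e: "e \<in> F"
  shows "cls V F ends (fst (ends e)) = cls V F ends (snd (ends e))"
proof -
  let ?r = "edge_rel F ends"
  obtain a b where ab0: "ends e = (a, b)" by (cases "ends e") auto
  have ab: "(a, b) \<in> ?r" and ba: "(b, a) \<in> ?r"
    using e ab0 unfolding edge_rel_def by (auto intro!: exI[of _ e] simp: prod.swap_def)
  have "{y \<in> V. (a, y) \<in> ?r\<^sup>*} = {y \<in> V. (b, y) \<in> ?r\<^sup>*}"
    using r_into_rtrancl[OF ab] r_into_rtrancl[OF ba] by (auto intro: rtrancl_trans)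
  thus ?thesis unfolding cls_def ab0 by simp
qed

lemma contr_conn:
  assumes "(x, y) \<in> (edge_rel E ends)\<^sup>*"
  shows "(cls V F ends x, cls V F ends y) \<in> (edge_rel (E - F) (contr_ends V F ends))\<^sup>*"
  using assms
proof (induction rule: rtrancl_induct)
  case base thus ?case by simp
next
  case (step y z)
  from step(2) obtain e where e: "e \<in> E" "(y, z) = ends e \<or> (y, z) = prod.swap (ends e)"
    unfolding edge_rel_def by blast
  have "cls V F ends y = cls V F ends z \<or> (cls V F ends y, cls V F ends z) \<in> edge_rel (E - F) (contr_ends V F ends)"
  proof (cases "e \<in> F")
    case True thus ?thesis using cls_eq[OF True, of V] e(2) by (auto simp: prod_eq_iff)
  next
    case False
    hence "e \<in> E - F" using e(1) by simp
    thus ?thesis using e(2) unfolding edge_rel_def contr_ends_def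
      by (auto simp: prod_eq_iff)
  qed
  thus ?case using step(3) by (auto intro: rtrancl_into_rtrancl)
qed

lemma contr_connected:
  assumes G: "connected_mgraph V E ends" and FE: "F \<subseteq> E"
  shows "connected_mgraph (cls V F ends ` V) (E - F) (contr_ends V F ends)"
  using G contr_conn[of _ _ E ends V F]
  unfolding connected_mgraph_def finite_mgraph_def contr_ends_def
  by auto

lemma loop_same:
  assumes fE: "finite Ed" and f: "f \<in> Ed" and uu: "en f = (u, u)"
  shows "det_lap W Ed en (c(f := q)) = det_lap W Ed en (c(f := 1))"
proof -
  have "lap Ed en (c(f := q)) = lap Ed en (c(f := 1))"
  proof (intro ext)
    fix h y
    show "lap Ed en (c(f := q)) h y = lap Ed en (c(f := 1)) h y"
      using lap_upd[where en=en and f=f and Ed=Ed, OF fE f uu, of c q h y]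
        lap_upd[where en=en and f=f and Ed=Ed, OF fE f uu, of c 1 h y] by auto
  qed
  thus ?thesis unfolding det_lap_def by simp
qed

lemma ratio_ge1:
  assumes "m \<ge> 0" "q \<ge> (1::real)"
  shows "(m + q) / (m + 1) \<ge> 1"
  using assms by (simp add: divide_simps)

lemma ratio_mono:
  assumes "0 \<le> a" "a \<le> b" "q \<ge> (1::real)"
  shows "(b + q) / (b + 1) \<le> (a + q) / (a + 1)"
proof -
  have "(b + q) * (a + 1) \<le> (a + q) * (b + 1)"
  proof -
    have "(a + q) * (b + 1) - (b + q) * (a + 1) = (q - 1) * (b - a)" by (simp add: algebra_simps)
    also have "\<dots> \<ge> 0" using assms by simp
    finally show ?thesis by simp
  qed
  thus ?thesis using assms by (simp add: divide_simps)
qed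

lemma En_mono_set:
  assumes "A \<subseteq> B" "finite B" "\<And>e. e \<in> B \<Longrightarrow> c e \<ge> 0"
  shows "En A en c g \<le> En B en c g"
  unfolding En_def by (rule sum_mono2) (use assms in auto)

theorem lemma4p8:
  fixes V V' :: "'v set" and E E' F :: "'e set" and ends :: "'e \<Rightarrow> 'v \<times> 'v"
    and q :: real and \<kappa> :: "'e \<Rightarrow> real" and f :: 'e
  assumes G: "connected_mgraph V E ends"
    and sub: "V' \<subseteq> V" "E' \<subseteq> E"
    and G': "connected_mgraph V' E' ends"
    and FE: "F \<subseteq> E"
    and q: "q \<ge> 1"
    and kappa: "\<forall>e\<in>E. \<kappa> e = 1 \<or> \<kappa> e = q"
    and f: "f \<in> E' - F"
  shows "det_lap V' E' ends (\<kappa>(f := q)) / det_lap V' E' ends (\<kappa>(f := 1))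
           \<ge> det_lap V E ends (\<kappa>(f := q)) / det_lap V E ends (\<kappa>(f := 1))
       \<and> det_lap V E ends (\<kappa>(f := q)) / det_lap V E ends (\<kappa>(f := 1))
           \<ge> det_lap (cls V F ends ` V) (E - F) (contr_ends V F ends) (\<kappa>(f := q))
             / det_lap (cls V F ends ` V) (E - F) (contr_ends V F ends) (\<kappa>(f := 1))"
proof -
  let ?W = "cls V F ends ` V" and ?Ec = "E - F" and ?en = "contr_ends V F ends"
  have GC: "connected_mgraph ?W ?Ec ?en" by (rule contr_connected[OF G FE])
  have fE: "finite E" using G unfolding connected_mgraph_def finite_mgraph_def by auto
  have fE': "finite E'" using G' unfolding connected_mgraph_def finite_mgraph_def by auto
  have fEc: "finite ?Ec" using fE by simp
  have fE1: "f \<in> E" and fE'1: "f \<in> E'" and fEc1: "f \<in> ?Ec" and fF: "f \<notin> F" using f sub by auto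
  have kpos: "\<kappa> e > 0" if "e \<in> E" for e using kappa that q by force
  have kpos1: "(\<kappa>(f := t)) e > 0" if "e \<in> E" "t > 0" for e t using kpos that by simp
  obtain u v where uv: "ends f = (u, v)" by (cases "ends f") auto
  have uvc: "?en f = (cls V F ends u, cls V F ends v)" unfolding contr_ends_def uv by simp
  define rG where "rG = det_lap V E ends (\<kappa>(f := q)) / det_lap V E ends (\<kappa>(f := 1))"
  define rG' where "rG' = det_lap V' E' ends (\<kappa>(f := q)) / det_lap V' E' ends (\<kappa>(f := 1))"
  define rC where "rC = det_lap ?W ?Ec ?en (\<kappa>(f := q)) / det_lap ?W ?Ec ?en (\<kappa>(f := 1))"
  have one: "det_lap W Ed en (\<kappa>(f := q)) / det_lap W Ed en (\<kappa>(f := 1)) = 1"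
    if Gx: "connected_mgraph W Ed en" and sE: "Ed \<subseteq> E" and fx: "f \<in> Ed" and loop: "en f = (w, w)"
    for W Ed and en :: "'e \<Rightarrow> 'w \<times> 'w" and w
  proof -
    have fEd: "finite Ed" using Gx unfolding connected_mgraph_def finite_mgraph_def by auto
    have "det_lap W Ed en (\<kappa>(f := 1)) > 0"
      by (rule det_lap_pos[OF Gx]) (use kpos sE in auto)
    thus ?thesis using loop_same[where en=en and f=f and Ed=Ed and W=W and c=\<kappa> and q=q, OF fEd fx loop] by simp
  qed
  show ?thesis
  proof (cases "u = v")
    case True
    have "rG = 1" unfolding rG_def by (rule one[OF G _ fE1]) (use uv True in auto)
    moreover have "rG' = 1" unfolding rG'_def by (rule one[OF G' sub(2) fE'1]) (use uv True in auto)
    moreover have "rC = 1" unfolding rC_def by (rule one[OF GC _ fEc1]) (use uvc True in auto)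
    ultimately show ?thesis unfolding rG_def rG'_def rC_def by simp
  next
    case neq: False
    obtain K2 m2 where K2: "K2 > 0" "\<forall>t>0. det_lap V E ends (\<kappa>(f := t)) = K2 * (m2 + t)"
      "\<forall>g. g u - g v = 1 \<longrightarrow> m2 \<le> En (E - {f}) ends \<kappa> g"
      and ex2: "\<exists>g. g u - g v = 1 \<and> En (E - {f}) ends \<kappa> g = m2"
      using pg2[OF G fE1 uv neq, of \<kappa>] kpos by blast
    obtain K1 m1 where K1: "K1 > 0" "\<forall>t>0. det_lap V' E' ends (\<kappa>(f := t)) = K1 * (m1 + t)"
      "\<forall>g. g u - g v = 1 \<longrightarrow> m1 \<le> En (E' - {f}) ends \<kappa> g"
      and ex1: "\<exists>g. g u - g v = 1 \<and> En (E' - {f}) ends \<kappa> g = m1"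
      using pg2[OF G' fE'1 uv neq, of \<kappa>] kpos sub(2) by blast
    obtain g2 where g2: "g2 u - g2 v = 1" "En (E - {f}) ends \<kappa> g2 = m2" using ex2 by blast
    have m2pos: "m2 \<ge> 0" using g2(2) En_nonneg[of "E - {f}" \<kappa> ends g2] kpos by (auto intro: less_imp_le)
    obtain g1 where g1: "g1 u - g1 v = 1" "En (E' - {f}) ends \<kappa> g1 = m1" using ex1 by blast
    have m1pos: "m1 \<ge> 0" using g1(2) En_nonneg[of "E' - {f}" \<kappa> ends g1] kpos sub(2) by (auto intro: less_imp_le)
    have m12: "m1 \<le> m2"
    proof -
      have "m1 \<le> En (E' - {f}) ends \<kappa> g2" using K1(3) g2(1) by blast
      also have "\<dots> \<le> En (E - {f}) ends \<kappa> g2"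
        by (rule En_mono_set) (use sub(2) fE kpos in \<open>auto intro: less_imp_le\<close>)
      finally show ?thesis using g2(2) by simp
    qed
    have rGe: "rG = (m2 + q) / (m2 + 1)"
      unfolding rG_def using K2(2) q K2(1) m2pos by simp
    have rG'e: "rG' = (m1 + q) / (m1 + 1)"
      unfolding rG'_def using K1(2) q K1(1) m1pos by simp
    have part1: "rG \<le> rG'" unfolding rGe rG'e by (rule ratio_mono[OF m1pos m12 q])
    have part2: "rC \<le> rG"
    proof (cases "cls V F ends u = cls V F ends v")
      case True
      have "rC = 1" unfolding rC_def by (rule one[OF GC _ fEc1]) (use uvc True in auto)
      thus ?thesis using ratio_ge1[OF m2pos q] rGe by simp
    next
      case neqc: False
      obtain K3 m3 where K3: "K3 > 0" "\<forall>t>0. det_lap ?W ?Ec ?en (\<kappa>(f := t)) = K3 * (m3 + t)"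
        and ex3: "\<exists>g. g (cls V F ends u) - g (cls V F ends v) = 1 \<and> En (?Ec - {f}) ?en \<kappa> g = m3"
        using pg2[OF GC fEc1 uvc neqc, of \<kappa>] kpos by blast
      obtain g3 where g3: "g3 (cls V F ends u) - g3 (cls V F ends v) = 1" "En (?Ec - {f}) ?en \<kappa> g3 = m3"
        using ex3 by blast
      define g where "g z = g3 (cls V F ends z)" for z
      have m3pos: "m3 \<ge> 0" using g3(2) En_nonneg[of "?Ec - {f}" \<kappa> ?en g3] kpos by (auto intro: less_imp_le)
      have "En (E - {f}) ends \<kappa> g = En (?Ec - {f}) ends \<kappa> g + En F ends \<kappa> g"
      proof -
        have "E - {f} = (?Ec - {f}) \<union> F" using FE fF by auto
        moreover have "(?Ec - {f}) \<inter> F = {}" by auto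
        ultimately show ?thesis unfolding En_def
          using fE FE by (simp add: sum.union_disjoint finite_subset)
      qed
      also have "En F ends \<kappa> g = 0"
        unfolding En_def g_def using cls_eq[of _ F V ends] by (intro sum.neutral) auto
      also have "En (?Ec - {f}) ends \<kappa> g = En (?Ec - {f}) ?en \<kappa> g3"
        unfolding En_def g_def contr_ends_def by simp
      finally have "En (E - {f}) ends \<kappa> g = m3" using g3(2) by simp
      moreover have "g u - g v = 1" using g3(1) by (simp add: g_def)
      ultimately have m23: "m2 \<le> m3" using K2(3) by metis
      have rCe: "rC = (m3 + q) / (m3 + 1)"
        unfolding rC_def using K3(2) q K3(1) m3pos by simp
      show ?thesis unfolding rCe rGe by (rule ratio_mono[OF m2pos m23 q])
    qed
    show ?thesis using part1 part2 unfolding rG_def rG'_def rC_def by simp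
  qed
qed


end
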